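(* Let $\mathcal V=\mathbb R^{d_v}$, $d(v,\hat v)=\|v-\hat v\|_2^2$, $\ell(v)=\max_{k\in[K]}(a_k^\top v+b_k)$ with $a_k\in\mathbb R^{d_v}$, $b_k\in\mathbb R$, $\hat\mu=\frac1n\sum_{i=1}^n\delta_{\hat v_i}$, $r\ge0$, $\theta_1,\theta_2>0$, and $\ell_\lambda(\hat v)=\sup_{v\in\mathcal V}\{\ell(v)-\lambda d(v,\hat v)\}$. Then the optimal value of $$\min_{\lambda\in\mathbb R_+}\ \lambda r+\lambda\theta_2\log\Big(\frac1n\sum_{i=1}^n\exp\Big(\frac{\ell_{\lambda\theta_1}(\hat v_i)}{\lambda\theta_2}\Big)\Big)$$ equals the optimal value of $$\begin{array}{lll}\min & \lambda r+t\\ \text{s.t.} & \lambda\in\mathbb R_+,\ t\in\mathbb R,\ \eta\in\mathbb R^n_+,\ p\in\mathbb R^n\\ & (\eta_i,\lambda\theta_2,p_i-t)\in\mathcal K_{\exp} & \forall i\in[n]\\ & a_k^\top\hat v_i+b_k+\frac{\|a_k\|_2^2}{4\lambda\theta_1}\le p_i & \forall k\in[K],\ i\in[n]\\ & \frac1n\sum_{i=1}^n\eta_i\le\lambda\theta_2.\end{array}$$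
   Context: $[n]=\{1,\dots,n\}$. The exponential cone is $\mathcal K_{\exp}=\{(x_1,x_2,x_3)\in\mathbb R^3:x_1\ge x_2\exp(x_3/x_2),\ x_2>0\}\cup\{(x_1,0,x_3):x_1\ge0,\ x_3\le0\}$. *)

theory Defs
  imports "HOL-Analysis.Analysis"
begin

definition Kexp :: "(real \<times> real \<times> real) set" where
  "Kexp = {(x1, x2, x3). x2 > 0 \<and> x1 \<ge> x2 * exp (x3 / x2)}
        \<union> {(x1, x2, x3). x2 = 0 \<and> x1 \<ge> 0 \<and> x3 \<le> 0}"

definition pl_loss :: "nat \<Rightarrow> (nat \<Rightarrow> real^'d) \<Rightarrow> (nat \<Rightarrow> real) \<Rightarrow> real^'d \<Rightarrow> real" where
  "pl_loss K a b v = Max ((\<lambda>k. a k \<bullet> v + b k) ` {1..K})"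

definition moreau_loss :: "nat \<Rightarrow> (nat \<Rightarrow> real^'d) \<Rightarrow> (nat \<Rightarrow> real) \<Rightarrow> real \<Rightarrow> real^'d \<Rightarrow> real" where
  "moreau_loss K a b lam vh = (SUP v. pl_loss K a b v - lam * (norm (v - vh))\<^sup>2)"

end

theory Submission
  imports Defs
begin

lemma moreau_eq:
  fixes a :: "nat \<Rightarrow> real^'d" and b :: "nat \<Rightarrow> real" and w :: "real^'d"
  assumes "K \<ge> 1" "\<mu> > 0"
  shows "moreau_loss K a b \<mu> w = Max ((\<lambda>k. a k \<bullet> w + b k + (norm (a k))\<^sup>2 / (4*\<mu>)) ` {1..K})"
proof -
  let ?g = "\<lambda>k. a k \<bullet> w + b k + (norm (a k))\<^sup>2 / (4*\<mu>)"
  let ?M = "Max (?g ` {1..K})"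
  have fin: "finite (?g ` {1..K})" and ne: "?g ` {1..K} \<noteq> {}" using assms by auto
  obtain k0 where k0: "k0 \<in> {1..K}" "?g k0 = ?M" using Max_in[OF fin ne] by auto
  have ub: "pl_loss K a b v - \<mu> * (norm (v - w))\<^sup>2 \<le> ?M" for v
  proof -
    obtain k where k: "k \<in> {1..K}" "pl_loss K a b v = a k \<bullet> v + b k"
    proof -
      have "pl_loss K a b v \<in> (\<lambda>k. a k \<bullet> v + b k) ` {1..K}"
        unfolding pl_loss_def using assms by (intro Max_in) auto
      then show ?thesis using that by auto
    qed
    have key: "a k \<bullet> v - \<mu> * (norm (v-w))\<^sup>2 \<le> a k \<bullet> w + (norm (a k))\<^sup>2/(4*\<mu>)"
    proof -
      have "0 \<le> \<mu> * (norm (v - w - (1/(2*\<mu>)) *\<^sub>R a k))\<^sup>2" using assms by simp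
      also have "\<dots> = \<mu>*(norm(v-w))\<^sup>2 - a k \<bullet> (v-w) + (norm (a k))\<^sup>2/(4*\<mu>)"
        using assms unfolding power2_norm_eq_inner
        by (simp add: inner_diff_left inner_diff_right algebra_simps power2_eq_square inner_commute)
      finally show ?thesis by (simp add: inner_diff_right)
    qed
    have "?g k \<le> ?M" using fin k by auto
    then show ?thesis using k key by linarith
  qed
  let ?v = "w + (1/(2*\<mu>)) *\<^sub>R a k0"
  have "a k0 \<bullet> ?v + b k0 \<le> pl_loss K a b ?v"
    unfolding pl_loss_def using k0(1) by (intro Max_ge) auto
  moreover have "a k0 \<bullet> ?v - \<mu> * (norm (?v - w))\<^sup>2 = ?g k0 - b k0"
    using assms unfolding power2_norm_eq_inner
    by (simp add: inner_add_right algebra_simps power2_eq_square)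
  ultimately have at: "?M \<le> pl_loss K a b ?v - \<mu> * (norm (?v - w))\<^sup>2"
    using k0 by linarith
  show ?thesis unfolding moreau_loss_def
  proof (rule cSup_eq_maximum)
    show "?M \<in> range (\<lambda>v. pl_loss K a b v - \<mu> * (norm (v - w))\<^sup>2)"
    proof (rule image_eqI[OF _ UNIV_I])
      show "?M = pl_loss K a b ?v - \<mu> * (norm (?v - w))\<^sup>2"
        using at ub[of ?v] by linarith
    qed
  qed (use ub in auto)
qed
theorem mainTheorem10:
  fixes vh :: "nat \<Rightarrow> real^'d" and a :: "nat \<Rightarrow> real^'d" and b :: "nat \<Rightarrow> real"
    and n K :: nat and r \<theta>1 \<theta>2 :: real
  assumes "n \<ge> 1" and "K \<ge> 1" and "r \<ge> 0" and "\<theta>1 > 0" and "\<theta>2 > 0"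
  shows "(INF lam \<in> {lam::real. lam > 0}.
            ereal (lam * r + lam * \<theta>2 *
              ln ((1 / real n) * (\<Sum>i=1..n. exp (moreau_loss K a b (lam * \<theta>1) (vh i) / (lam * \<theta>2))))))
       = Inf {ereal (lam * r + t) | lam t \<eta> p.
                lam \<ge> 0 \<and> (\<forall>i\<in>{1..n}. \<eta> i \<ge> 0)
              \<and> (\<forall>i\<in>{1..n}. (\<eta> i, lam * \<theta>2, p i - t) \<in> Kexp)
              \<and> (\<forall>k\<in>{1..K}. \<forall>i\<in>{1..n}.
                    ereal (a k \<bullet> vh i + b k) + ereal ((norm (a k))\<^sup>2) / ereal (4 * lam * \<theta>1)
                    \<le> ereal (p i))
              \<and> (1 / real n) * (\<Sum>i=1..n. \<eta> i) \<le> lam * \<theta>2}"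
proof -
  define ell where "ell lam i = Max ((\<lambda>k. a k \<bullet> vh i + b k + (norm (a k))\<^sup>2 / (4*lam*\<theta>1)) ` {1..K})" for lam i
  have mo: "moreau_loss K a b (lam*\<theta>1) (vh i) = ell lam i" if "lam > 0" for lam i
    using moreau_eq[of K "lam*\<theta>1" a b "vh i"] assms that by (simp add: ell_def mult.assoc)
  define L where "L lam = lam * r + lam * \<theta>2 * ln ((1 / real n) * (\<Sum>i=1..n. exp (ell lam i / (lam * \<theta>2))))" for lam
  have Leq: "lam * r + lam * \<theta>2 *
              ln ((1 / real n) * (\<Sum>i=1..n. exp (moreau_loss K a b (lam * \<theta>1) (vh i) / (lam * \<theta>2))))
     = L lam" if "lam > 0" for lam
    unfolding L_def using mo[OF that] by simp
  define S where "S = {ereal (lam * r + t) | lam t \<eta> p.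
                lam \<ge> 0 \<and> (\<forall>i\<in>{1..n}. \<eta> i \<ge> 0)
              \<and> (\<forall>i\<in>{1..n}. (\<eta> i, lam * \<theta>2, p i - t) \<in> Kexp)
              \<and> (\<forall>k\<in>{1..K}. \<forall>i\<in>{1..n}.
                    ereal (a k \<bullet> vh i + b k) + ereal ((norm (a k))\<^sup>2) / ereal (4 * lam * \<theta>1)
                    \<le> ereal (p i))
              \<and> (1 / real n) * (\<Sum>i=1..n. \<eta> i) \<le> lam * \<theta>2}"
  have INFeq: "(INF lam \<in> {lam::real. lam > 0}.
            ereal (lam * r + lam * \<theta>2 *
              ln ((1 / real n) * (\<Sum>i=1..n. exp (moreau_loss K a b (lam * \<theta>1) (vh i) / (lam * \<theta>2))))))
        = (INF lam \<in> {lam::real. lam > 0}. ereal (L lam))"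
    by (rule INF_cong[OF refl], rule arg_cong[where f=ereal], rule Leq) simp
  have npos: "real n > 0" using assms by simp
  have A: "(INF lam \<in> {lam::real. lam > 0}. ereal (L lam)) \<le> x" if "x \<in> S" for x
  proof -
    from that obtain lam t \<eta> p where x: "x = ereal (lam * r + t)" and
      lam0: "lam \<ge> 0" and eta0: "\<forall>i\<in>{1..n}. \<eta> i \<ge> 0" and
      kx: "\<forall>i\<in>{1..n}. (\<eta> i, lam * \<theta>2, p i - t) \<in> Kexp" and
      con: "\<forall>k\<in>{1..K}. \<forall>i\<in>{1..n}.
                    ereal (a k \<bullet> vh i + b k) + ereal ((norm (a k))\<^sup>2) / ereal (4 * lam * \<theta>1)
                    \<le> ereal (p i)" and
      sm: "(1 / real n) * (\<Sum>i=1..n. \<eta> i) \<le> lam * \<theta>2"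
      unfolding S_def by blast
    show ?thesis
    proof (cases "lam > 0")
      case True
      define c where "c = lam * \<theta>2"
      have c: "c > 0" using True assms by (simp add: c_def)
      have lp: "ell lam i \<le> p i" if i: "i \<in> {1..n}" for i
        unfolding ell_def
      proof (subst Max_le_iff, simp, use assms in simp, safe)
        fix k assume "k \<in> {1..K}"
        then have "ereal (a k \<bullet> vh i + b k) + ereal ((norm (a k))\<^sup>2) / ereal (4 * lam * \<theta>1) \<le> ereal (p i)"
          using con i by blast
        then show "a k \<bullet> vh i + b k + (norm (a k))\<^sup>2 / (4 * lam * \<theta>1) \<le> p i"
          using True assms by simp
      qed
      have eta: "c * exp ((p i - t) / c) \<le> \<eta> i" if i: "i \<in> {1..n}" for i
        using kx i c unfolding Kexp_def c_def by auto
      have "(\<Sum>i=1..n. exp (ell lam i / c)) \<le> (\<Sum>i=1..n. exp (p i / c))"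
        using lp c by (intro sum_mono) (simp add: divide_right_mono)
      also have "\<dots> = (\<Sum>i=1..n. exp (t / c) * exp ((p i - t) / c))"
        by (intro sum.cong) (auto simp: exp_add[symmetric] diff_divide_distrib)
      also have "\<dots> \<le> (\<Sum>i=1..n. exp (t / c) * (\<eta> i / c))"
        using eta c by (intro sum_mono mult_left_mono) (auto simp: field_simps)
      also have "\<dots> = exp (t / c) / c * (\<Sum>i=1..n. \<eta> i)"
        by (simp add: sum_distrib_left)
      also have "\<dots> \<le> exp (t / c) / c * (real n * c)"
        using sm npos c by (intro mult_left_mono) (auto simp: c_def field_simps)
      also have "\<dots> = real n * exp (t / c)" using c by simp
      finally have s1: "(1 / real n) * (\<Sum>i=1..n. exp (ell lam i / c)) \<le> exp (t / c)"
        using npos by (simp add: field_simps)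
      have spos: "0 < (1 / real n) * (\<Sum>i=1..n. exp (ell lam i / c))"
        using npos assms by (intro mult_pos_pos sum_pos) auto
      have "ln ((1 / real n) * (\<Sum>i=1..n. exp (ell lam i / c))) \<le> t / c"
        using ln_le_cancel_iff[OF spos, of "exp (t/c)"] s1 by simp
      then have "c * ln ((1 / real n) * (\<Sum>i=1..n. exp (ell lam i / c))) \<le> t"
        using c by (simp add: field_simps)
      then have "L lam \<le> lam * r + t" unfolding L_def c_def by simp
      moreover have "(INF lam \<in> {lam::real. lam > 0}. ereal (L lam)) \<le> ereal (L lam)"
        using True by (intro INF_lower) simp
      ultimately show ?thesis using x order_trans by fastforce
    next
      case False
      then have l0: "lam = 0" using lam0 by simp
      have i1: "1 \<in> {1..n}" using assms by simp
      have ak: "a k = 0" if k: "k \<in> {1..K}" for k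
      proof (rule ccontr)
        assume "a k \<noteq> 0"
        then have "(norm (a k))\<^sup>2 > 0" by simp
        moreover have "ereal (a k \<bullet> vh 1 + b k) + ereal ((norm (a k))\<^sup>2) / ereal 0 \<le> ereal (p 1)"
          using con k i1 l0 by auto
        ultimately show False by simp
      qed
      define B where "B = Max (b ` {1..K})"
      have lB: "ell lam' i = B" for lam' i
        unfolding ell_def B_def using ak by (intro arg_cong[where f=Max] image_cong) auto
      have LB: "L lam' = lam' * r + B" if "lam' > 0" for lam'
      proof -
        have "lam' * \<theta>2 > 0" using that assms by simp
        then show ?thesis unfolding L_def lB using npos that assms by simp
      qed
      have pt: "p 1 \<le> t" using kx i1 l0 unfolding Kexp_def by auto
      have "b k \<le> p 1" if "k \<in> {1..K}" for k
      proof -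
        have "ereal (a k \<bullet> vh 1 + b k) + ereal ((norm (a k))\<^sup>2) / ereal (4 * lam * \<theta>1) \<le> ereal (p 1)"
          using con that i1 by blast
        then show ?thesis using l0 ak[OF that] by simp
      qed
      then have Bt: "B \<le> t" unfolding B_def using pt assms
        by (subst Max_le_iff) (auto, meson atLeastAtMost_iff order_trans)
      have "(INF lam \<in> {lam::real. lam > 0}. ereal (L lam)) \<le> ereal t"
      proof (rule dense_ge)
        fix y assume y: "ereal t < y"
        show "(INF lam \<in> {lam::real. lam > 0}. ereal (L lam)) \<le> y"
        proof (cases y)
          case (real y')
          define lm where "lm = (y' - B) / (r + 1)"
          have yB: "y' > B" using y real Bt by simp
          have lm: "lm > 0" using yB assms by (simp add: lm_def)
          have "lm * r \<le> y' - B" using yB assms unfolding lm_def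
            by (simp add: field_simps)
          then have "L lm \<le> y'" using LB[OF lm] by simp
          moreover have "(INF lam \<in> {lam::real. lam > 0}. ereal (L lam)) \<le> ereal (L lm)"
            using lm by (intro INF_lower) simp
          ultimately show ?thesis using real order_trans by fastforce
        qed (use y in auto)
      qed
      then show ?thesis using x l0 by simp
    qed
  qed
  have B: "Inf S \<le> ereal (L lam)" if lam: "lam > 0" for lam
  proof -
    define c where "c = lam * \<theta>2"
    have c: "c > 0" using lam assms by (simp add: c_def)
    define S0 where "S0 = (1 / real n) * (\<Sum>i=1..n. exp (ell lam i / c))"
    have spos: "S0 > 0"
      unfolding S0_def using npos assms by (intro mult_pos_pos sum_pos) auto
    define t where "t = c * ln S0"
    define \<eta> where "\<eta> i = c * exp ((ell lam i - t) / c)" for i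
    have et: "exp (t / c) = S0" using c spos by (simp add: t_def)
    have Lt: "L lam = lam * r + t" unfolding L_def t_def S0_def c_def by simp
    have "(\<Sum>i=1..n. \<eta> i) = c / S0 * (\<Sum>i=1..n. exp (ell lam i / c))"
      unfolding \<eta>_def sum_distrib_left
      by (intro sum.cong) (auto simp: diff_divide_distrib exp_diff et)
    then have sm: "(1 / real n) * (\<Sum>i=1..n. \<eta> i) = c"
      using spos c npos unfolding S0_def by (simp add: field_simps)
    have "ereal (lam * r + t) \<in> S"
      unfolding S_def
    proof (intro CollectI exI conjI)
      show "ereal (lam * r + t) = ereal (lam * r + t)" ..
      show "0 \<le> lam" using lam by simp
      show "\<forall>i\<in>{1..n}. 0 \<le> \<eta> i" using c by (simp add: \<eta>_def)
      show "\<forall>i\<in>{1..n}. (\<eta> i, lam * \<theta>2, ell lam i - t) \<in> Kexp"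
        using c unfolding Kexp_def \<eta>_def c_def by auto
      show "(1 / real n) * (\<Sum>i=1..n. \<eta> i) \<le> lam * \<theta>2" using sm c_def by simp
      show "\<forall>k\<in>{1..K}. \<forall>i\<in>{1..n}. ereal (a k \<bullet> vh i + b k) + ereal ((norm (a k))\<^sup>2) / ereal (4 * lam * \<theta>1)
                    \<le> ereal (ell lam i)"
      proof (intro ballI)
        fix k i assume k: "k \<in> {1..K}" and "i \<in> {1..n}"
        have "a k \<bullet> vh i + b k + (norm (a k))\<^sup>2 / (4 * lam * \<theta>1) \<le> ell lam i"
          unfolding ell_def using k by (intro Max_ge) auto
        then show "ereal (a k \<bullet> vh i + b k) + ereal ((norm (a k))\<^sup>2) / ereal (4 * lam * \<theta>1)
                    \<le> ereal (ell lam i)" using lam assms by simp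
      qed
    qed
    then show ?thesis unfolding Lt by (rule Inf_lower)
  qed
  have "(INF lam \<in> {lam::real. lam > 0}. ereal (L lam)) = Inf S"
  proof (rule antisym)
    show "(INF lam \<in> {lam::real. lam > 0}. ereal (L lam)) \<le> Inf S"
      using A by (rule Inf_greatest)
    show "Inf S \<le> (INF lam \<in> {lam::real. lam > 0}. ereal (L lam))"
      using B by (intro INF_greatest) simp
  qed
  then show ?thesis unfolding INFeq S_def .
qed

end
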